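(* Let $W:\mathbb{R}\to\mathbb{R}$ be an AWGN channel with noise variance $\sigma_W^2>0$, i.e. for input $x$ the output is distributed as $\mathcal{N}(x,\sigma_W^2)$. Let $P>0$ and, for each $n$, let $e_{0,n}:\{0,1\}^{l_n}\to\mathbb{R}^n$ be an encoder satisfying $\frac1n\|e_{0,n}(v)\|_2^2\le P$ for all $v\in\{0,1\}^{l_n}$. Let $W_{e_{0,n}}:\{0,1\}^{l_n}\to\mathbb{R}^n$ be the channel whose output given input $v$ is $e_{0,n}(v)+N$ with $N\sim\mathcal{N}(0,\sigma_W^2 I_n)$. Then for every $0<\delta<1/2$, with $\epsilon_n=e^{-n\delta^2/8}$, \[ I_{\max}^{\epsilon_n}(W_{e_{0,n}})\le \frac n2\log\Big(1+\delta+\frac{P}{\sigma_W^2}\Big)+\frac{n\delta\log e}{2}+o(n)\quad\text{as } n\to\infty, \] with logarithms to base 2.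
   Context: For a (possibly subnormalized) channel $V$ from a finite set $\mathcal{V}$ to $\mathbb{R}^n$ with densities $\omega(z\mid v)$ w.r.t. Lebesgue measure, its max-information is $I_{\max}(V)=\log_2\int_{\mathbb{R}^n}\max_{v\in\mathcal{V}}\omega(z\mid v)\,dz$. For measurable $\mathcal{T}\subseteq\mathcal{V}\times\mathbb{R}^n$, $V_{\mathcal{T}}$ is the subnormalized channel with density $\omega_{\mathcal{T}}(z\mid v)=\omega(z\mid v)$ if $(v,z)\in\mathcal{T}$ and $0$ otherwise. The $\epsilon$-smooth max-information $I_{\max}^{\epsilon}(V)$ is the infimum of $I_{\max}(V_{\mathcal{T}})$ over all such $\mathcal{T}$ with $V(\{z:(v,z)\in\mathcal{T}\}\mid v)\ge 1-\epsilon$ for every $v\in\mathcal{V}$. *)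

theory Defs
  imports "HOL-Probability.Probability" "HOL-Library.Landau_Symbols"
begin

definition log2_ennreal :: "ennreal \<Rightarrow> ereal" where
  "log2_ennreal x = (if x = \<infinity> then \<infinity> else if x = 0 then - \<infinity>
                     else ereal (log 2 (enn2real x)))"

definition restr_dens :: "('v \<times> 'z) set \<Rightarrow> ('v \<Rightarrow> 'z \<Rightarrow> real) \<Rightarrow> 'v \<Rightarrow> 'z \<Rightarrow> real" where
  "restr_dens T \<omega> v z = (if (v, z) \<in> T then \<omega> v z else 0)"

definition Imax :: "'z measure \<Rightarrow> 'v set \<Rightarrow> ('v \<Rightarrow> 'z \<Rightarrow> real) \<Rightarrow> ereal" where
  "Imax M V \<omega> = log2_ennreal (\<integral>\<^sup>+ z. ennreal (Max ((\<lambda>v. \<omega> v z) ` V)) \<partial>M)"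

definition smooth_Imax :: "'z measure \<Rightarrow> 'v set \<Rightarrow> ('v \<Rightarrow> 'z \<Rightarrow> real) \<Rightarrow> real \<Rightarrow> ereal" where
  "smooth_Imax M V \<omega> \<epsilon> =
     (INF T \<in> {T. T \<in> sets (count_space V \<Otimes>\<^sub>M M) \<and>
                 (\<forall>v\<in>V. (\<integral>\<^sup>+ z. indicator {z. (v, z) \<in> T} z * ennreal (\<omega> v z) \<partial>M)
                          \<ge> ennreal (1 - \<epsilon>))}.
        Imax M V (restr_dens T \<omega>))"

definition lborel_n :: "nat \<Rightarrow> (nat \<Rightarrow> real) measure" where
  "lborel_n n = PiM {..<n} (\<lambda>_. lborel)"

text \<open>Density of the channel W_e: output e(v) + N, N ~ N(0, s I_n), s the noise variance.\<close>
definition awgn_dens :: "real \<Rightarrow> nat \<Rightarrow> ('v \<Rightarrow> nat \<Rightarrow> real) \<Rightarrow> 'v \<Rightarrow> (nat \<Rightarrow> real) \<Rightarrow> real" where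
  "awgn_dens s n e v z = (\<Prod>i<n. normal_density (e v i) (sqrt s) (z i))"

end

theory Submission
  imports Defs
begin

lemma nd_alt: "\<sigma> > 0 \<Longrightarrow> normal_density \<mu> (sqrt \<sigma>) z = exp (-(z-\<mu>)\<^sup>2/(2 * \<sigma>)) / sqrt (2 * pi * \<sigma>)"
  by (simp add: normal_density_def)

lemma gauss_pt:
  fixes \<sigma> s \<theta> x z D :: real
  assumes "\<sigma> > 0" "s \<ge> \<sigma>" "\<theta> \<ge> 0" and Dd: "D = (1+\<theta>) * s - \<theta> * \<sigma>"
  shows "normal_density x (sqrt \<sigma>) z * (normal_density x (sqrt \<sigma>) z / normal_density 0 (sqrt s) z) powr \<theta>
     = ((s/\<sigma>) powr (\<theta>/2) * sqrt (s/D) * exp (\<theta> * (1+\<theta>) * x\<^sup>2/(2 * D))) * normal_density ((1+\<theta>) * x * s/D) (sqrt (\<sigma> * s/D)) z"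
proof -
  have s0: "s > 0" using assms by linarith
  have "\<theta> * (s - \<sigma>) \<ge> 0" using assms by simp
  hence D0: "D > 0" unfolding Dd using s0 by (simp add: algebra_simps)
  have r: "normal_density x (sqrt \<sigma>) z / normal_density 0 (sqrt s) z
      = sqrt (s/\<sigma>) * exp (-(z-x)\<^sup>2/(2 * \<sigma>) + z\<^sup>2/(2 * s))"
  proof -
    have g: "\<And>A B. exp (-A) / sqrt (2 * pi * \<sigma>) / (exp (-B) / sqrt (2 * pi * s)) = sqrt (s/\<sigma>) * exp (-A + B)"
      using assms s0 by (simp add: exp_add exp_minus exp_diff real_sqrt_divide real_sqrt_mult field_simps)
    have n1: "normal_density x (sqrt \<sigma>) z = exp (-((z-x)\<^sup>2/(2 * \<sigma>))) / sqrt (2 * pi * \<sigma>)"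
      using nd_alt[OF assms(1)] by (metis minus_divide_left)
    have n2: "normal_density 0 (sqrt s) z = exp (-(z\<^sup>2/(2 * s))) / sqrt (2 * pi * s)"
      using nd_alt[OF s0] by (metis minus_divide_left diff_zero)
    show ?thesis unfolding n1 n2 g by (metis minus_divide_left)
  qed
  have p: "(sqrt (s/\<sigma>) * exp (-(z-x)\<^sup>2/(2 * \<sigma>) + z\<^sup>2/(2 * s))) powr \<theta>
      = (s/\<sigma>) powr (\<theta>/2) * exp (\<theta> * (-(z-x)\<^sup>2/(2 * \<sigma>) + z\<^sup>2/(2 * s)))"
    using assms s0 by (simp add: powr_mult powr_half_sqrt[symmetric] powr_powr exp_powr_real)
  have e: "-(z-x)\<^sup>2/(2 * \<sigma>) + \<theta> * (-(z-x)\<^sup>2/(2 * \<sigma>) + z\<^sup>2/(2 * s))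
     = \<theta> * (1+\<theta>) * x\<^sup>2/(2 * D) + (-(z-(1+\<theta>) * x * s/D)\<^sup>2/(2 * (\<sigma> * s/D)))"
    using assms(1) s0 D0 apply (simp add: field_simps power2_eq_square)
    by (simp add: Dd algebra_simps)
  have c: "sqrt (s/D) / sqrt (2 * pi * (\<sigma> * s/D)) = 1 / sqrt (2 * pi * \<sigma>)"
    using assms s0 D0 by (simp add: real_sqrt_divide real_sqrt_mult field_simps)
  have pos: "\<sigma> * s / D > 0" using assms(1) s0 D0 by simp
  have "normal_density x (sqrt \<sigma>) z * (normal_density x (sqrt \<sigma>) z / normal_density 0 (sqrt s) z) powr \<theta>
      = (s/\<sigma>) powr (\<theta>/2) * (1 / sqrt (2 * pi * \<sigma>)) * exp (-(z-x)\<^sup>2/(2 * \<sigma>) + \<theta> * (-(z-x)\<^sup>2/(2 * \<sigma>) + z\<^sup>2/(2 * s)))"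
    apply (subst r, subst p) by (simp add: nd_alt[OF assms(1)] exp_add exp_diff exp_minus field_simps)
  also have "\<dots> = (s/\<sigma>) powr (\<theta>/2) * (sqrt (s/D) / sqrt (2 * pi * (\<sigma> * s/D))) * exp (\<theta> * (1+\<theta>) * x\<^sup>2/(2 * D) + (-(z-(1+\<theta>) * x * s/D)\<^sup>2/(2 * (\<sigma> * s/D))))"
    unfolding e c ..
  also have "\<dots> = ((s/\<sigma>) powr (\<theta>/2) * sqrt (s/D) * exp (\<theta> * (1+\<theta>) * x\<^sup>2/(2 * D))) * normal_density ((1+\<theta>) * x * s/D) (sqrt (\<sigma> * s/D)) z"
    unfolding nd_alt[OF pos] exp_add by simp
  finally show ?thesis .
qed

lemma nd_int1: "\<sigma> > 0 \<Longrightarrow> (\<integral>\<^sup>+z. ennreal (normal_density \<mu> \<sigma> z) \<partial>lborel) = 1"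
  by (simp add: nn_integral_eq_integral[OF integrable_normal_density])

lemma gauss_int:
  fixes \<sigma> s \<theta> x D :: real
  assumes "\<sigma> > 0" "s \<ge> \<sigma>" "\<theta> \<ge> 0" and Dd: "D = (1+\<theta>) * s - \<theta> * \<sigma>"
  shows "(\<integral>\<^sup>+z. ennreal (normal_density x (sqrt \<sigma>) z * (normal_density x (sqrt \<sigma>) z / normal_density 0 (sqrt s) z) powr \<theta>) \<partial>lborel)
     = ennreal (exp (\<theta>/2 * ln (s/\<sigma>) + ln (s/D)/2 + \<theta> * (1+\<theta>) * x\<^sup>2/(2 * D)))"
proof -
  have s0: "s > 0" using assms by linarith
  have "\<theta> * (s - \<sigma>) \<ge> 0" using assms by simp
  hence D0: "D > 0" unfolding Dd using s0 by (simp add: algebra_simps)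
  define C where "C = (s/\<sigma>) powr (\<theta>/2) * sqrt (s/D) * exp (\<theta> * (1+\<theta>) * x\<^sup>2/(2 * D))"
  have C: "C = exp (\<theta>/2 * ln (s/\<sigma>) + ln (s/D)/2 + \<theta> * (1+\<theta>) * x\<^sup>2/(2 * D))"
  proof -
    have "s/\<sigma> \<noteq> 0" using s0 assms(1) by simp
    hence "(s/\<sigma>) powr (\<theta>/2) = exp (\<theta>/2 * ln (s/\<sigma>))" unfolding powr_def by (simp only: if_False)
    moreover have "sqrt (s/D) = exp (ln (s/D)/2)"
    proof -
      have y0: "s/D > 0" using s0 D0 by simp
      hence "sqrt (s/D) = exp (ln (sqrt (s/D)))" by simp
      also have "ln (sqrt (s/D)) = ln (s/D)/2" using y0 by (simp add: ln_sqrt)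
      finally show ?thesis .
    qed
    ultimately show ?thesis unfolding C_def by (simp only: exp_add)
  qed
  have C0: "C \<ge> 0" unfolding C by simp
  have "(\<integral>\<^sup>+z. ennreal (normal_density x (sqrt \<sigma>) z * (normal_density x (sqrt \<sigma>) z / normal_density 0 (sqrt s) z) powr \<theta>) \<partial>lborel)
     = (\<integral>\<^sup>+z. ennreal C * ennreal (normal_density ((1+\<theta>) * x * s/D) (sqrt (\<sigma> * s/D)) z) \<partial>lborel)"
    unfolding gauss_pt[OF assms] C_def[symmetric] using C0 by (intro nn_integral_cong ennreal_mult) auto
  also have "\<dots> = ennreal C" using s0 D0 assms(1) by (subst nn_integral_cmult) (auto simp: nd_int1)
  finally show ?thesis unfolding C .
qed

lemma prodint:
  fixes g :: "nat \<Rightarrow> real \<Rightarrow> real"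
  assumes "\<And>i. g i \<in> borel_measurable borel" "\<And>i z. g i z \<ge> 0"
  shows "(\<integral>\<^sup>+z. ennreal (\<Prod>i<n. g i (z i)) \<partial>lborel_n n) = (\<Prod>i<n. \<integral>\<^sup>+x. ennreal (g i x) \<partial>lborel)"
proof -
  interpret product_sigma_finite "\<lambda>_. lborel" by standard
  have "(\<integral>\<^sup>+z. ennreal (\<Prod>i<n. g i (z i)) \<partial>lborel_n n) = (\<integral>\<^sup>+z. (\<Prod>i<n. ennreal (g i (z i))) \<partial>lborel_n n)"
    using assms(2) by (simp add: prod_ennreal)
  also have "\<dots> = (\<Prod>i<n. \<integral>\<^sup>+x. ennreal (g i x) \<partial>lborel)"
    unfolding lborel_n_def
    by (rule product_nn_integral_prod[where f="\<lambda>i x. ennreal (g i x)"]) (use assms(1) in auto)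
  finally show ?thesis .
qed

lemma scalar:
  fixes \<sigma> P \<delta> s \<theta> D :: real
  assumes "\<sigma> > 0" "P > 0" "0 < \<delta>" "\<delta> < 1/2" and sd: "s = \<sigma> * (1+\<delta>) + P" and td: "\<theta> = \<delta>/2"
    and Dd: "D = (1+\<theta>) * s - \<theta> * \<sigma>"
  shows "ln (s/D)/2 + \<theta> * (1+\<theta>)/(2 * D) * P \<le> \<delta>\<^sup>2/8"
proof -
  define a where "a = \<sigma> * \<delta> + P"
  have a0: "a > 0" unfolding a_def using assms by (simp add: add_pos_pos)
  have sa: "s = \<sigma> + a" unfolding a_def sd by (simp add: algebra_simps)
  have s0: "s > 0" using sa a0 assms by simp
  define y where "y = \<theta> * a / s"
  have y0: "0 \<le> y" unfolding y_def using a0 s0 td assms by simp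
  have y1: "y \<le> 1"
  proof -
    have "a / s \<le> 1" using sa assms a0 s0 by simp
    moreover have "\<theta> \<le> 1" using td assms by simp
    ultimately have "\<theta> * (a/s) \<le> 1 * 1" using y0 td assms a0 s0 by (intro mult_mono) auto
    thus ?thesis unfolding y_def by simp
  qed
  have DD: "D = s * (1 + y)" unfolding Dd y_def using s0 sa by (simp add: field_simps)
  have D0: "D > 0" unfolding DD using s0 y0 by simp
  have ln1: "ln (s/D) = - ln (1+y)" unfolding DD using s0 y0 by (simp add: ln_div ln_mult)
  have lnb: "y - y\<^sup>2 \<le> ln (1+y)" using ln_one_plus_pos_lower_bound y0 y1 by blast
  have A: "\<theta> * (1+\<theta>) * P / (s * (1+y)) \<le> \<theta> * P / s + \<theta>\<^sup>2 * P * \<sigma> / s\<^sup>2"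
  proof -
    have th0: "\<theta> > 0" using td assms by simp
    have "(1+\<theta>) * P * s \<le> (P * s + \<theta> * P * \<sigma>) * (1+y)"
    proof -
      have "(P * s + \<theta> * P * \<sigma>) * (1+y) - (1+\<theta>) * P * s = \<theta> * P * \<sigma> * y"
        unfolding y_def using s0 sa by (simp add: field_simps)
      moreover have "\<theta> * P * \<sigma> * y \<ge> 0" using th0 assms y0 by simp
      ultimately show ?thesis by linarith
    qed
    hence "\<theta> * ((1+\<theta>) * P * s) \<le> \<theta> * ((P * s + \<theta> * P * \<sigma>) * (1+y))"
      using th0 by (intro mult_left_mono) auto
    hence "\<theta> * ((1+\<theta>) * P * s) / s \<le> \<theta> * ((P * s + \<theta> * P * \<sigma>) * (1+y)) / s"
      using s0 by (intro divide_right_mono) auto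
    moreover have "\<theta> * ((1+\<theta>) * P * s) / s = \<theta> * (1+\<theta>) * P" using s0 by simp
    moreover have "\<theta> * ((P * s + \<theta> * P * \<sigma>) * (1+y)) / s = (\<theta> * P / s + \<theta>\<^sup>2 * P * \<sigma> / s\<^sup>2) * (s * (1+y))"
      using s0 by (simp add: field_simps power2_eq_square)
    ultimately have "\<theta> * (1+\<theta>) * P \<le> (\<theta> * P / s + \<theta>\<^sup>2 * P * \<sigma> / s\<^sup>2) * (s * (1+y))" by simp
    moreover have "s * (1+y) > 0" using s0 y0 by simp
    ultimately show ?thesis by (simp add: pos_divide_le_eq)
  qed
  have B: "-y + y\<^sup>2 + \<theta> * P / s + \<theta>\<^sup>2 * P * \<sigma> / s\<^sup>2 \<le> \<theta>\<^sup>2"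
  proof -
    have e1: "-y + \<theta> * P / s = - \<theta> * \<sigma> * \<delta> / s" unfolding y_def a_def using s0 by (simp add: field_simps)
    have e2: "y\<^sup>2 + \<theta>\<^sup>2 * P * \<sigma> / s\<^sup>2 = \<theta>\<^sup>2 * ((a\<^sup>2 + P * \<sigma>) / s\<^sup>2)" unfolding y_def using s0 by (simp add: field_simps power2_eq_square)
    have "a\<^sup>2 + P * \<sigma> \<le> s\<^sup>2" unfolding sa using assms a0 unfolding a_def by (simp add: power2_eq_square algebra_simps)
    hence "(a\<^sup>2 + P * \<sigma>) / s\<^sup>2 \<le> 1" using s0 by simp
    hence "\<theta>\<^sup>2 * ((a\<^sup>2 + P * \<sigma>) / s\<^sup>2) \<le> \<theta>\<^sup>2 * 1" by (intro mult_left_mono) auto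
    moreover have "- \<theta> * \<sigma> * \<delta> / s \<le> 0" using td assms s0 by simp
    ultimately show ?thesis using e1 e2 by linarith
  qed
  have "ln (s/D)/2 + \<theta> * (1+\<theta>)/(2 * D) * P = (- ln (1+y) + \<theta> * (1+\<theta>) * P / (s * (1+y)))/2"
  proof -
    have "s + s * y > 0" using s0 y0 by (simp add: add_pos_nonneg)
    thus ?thesis by (simp only: ln1) (simp add: DD field_simps)
  qed
  also have "\<dots> \<le> (-(y - y\<^sup>2) + \<theta> * (1+\<theta>) * P / (s * (1+y)))/2" using lnb by simp
  also have "\<dots> \<le> \<theta>\<^sup>2/2" 
  proof -
    have "-(y - y\<^sup>2) + \<theta> * (1+\<theta>) * P / (s * (1+y)) \<le> \<theta>\<^sup>2" using A B by linarith
    thus ?thesis by (rule divide_right_mono) simp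
  qed
  also have "\<dots> = \<delta>\<^sup>2/8" unfolding td by (simp add: power2_eq_square)
  finally show ?thesis .
qed

lemma ennreal_ge_sub:
  fixes a :: ennreal and \<epsilon> :: real
  assumes "1 \<le> a + ennreal \<epsilon>" "0 \<le> \<epsilon>"
  shows "ennreal (1 - \<epsilon>) \<le> a"
proof (cases "\<epsilon> \<le> 1")
  case True
  have "ennreal (1 - \<epsilon>) + ennreal \<epsilon> = 1" using True assms(2) by (simp flip: ennreal_plus)
  hence "ennreal \<epsilon> + ennreal (1 - \<epsilon>) \<le> ennreal \<epsilon> + a" using assms(1) by (simp add: add.commute)
  thus ?thesis by (simp add: ennreal_add_left_cancel_le)
next
  case False
  hence "ennreal (1 - \<epsilon>) = 0" by (simp add: ennreal_neg)
  thus ?thesis by simp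
qed

lemma log2_le:
  assumes "X \<le> ennreal c" "c > 0"
  shows "log2_ennreal X \<le> ereal (log 2 c)"
proof (cases X rule: ennreal_cases)
  case (real x)
  show ?thesis
  proof (cases "x = 0")
    case True thus ?thesis using real by (simp add: log2_ennreal_def)
  next
    case False
    hence "x > 0" using real by simp
    moreover have "x \<le> c" using assms real by simp
    ultimately show ?thesis using real False by (simp add: log2_ennreal_def)
  qed
next
  case top thus ?thesis using assms(1) by (simp add: top_unique)
qed

theorem lemma6:
  fixes \<sigma>W2 P \<delta> :: real
    and l :: "nat \<Rightarrow> nat"
    and e :: "nat \<Rightarrow> bool list \<Rightarrow> nat \<Rightarrow> real"
  assumes "\<sigma>W2 > 0" and "P > 0"
    and power: "\<And>n v. length v = l n \<Longrightarrow> (1 / real n) * (\<Sum>i<n. (e n v i)\<^sup>2) \<le> P"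
    and "0 < \<delta>" and "\<delta> < 1 / 2"
  shows "\<exists>g. g \<in> o(\<lambda>n. real n) \<and>
           (\<forall>\<^sub>F n in at_top.
              smooth_Imax (lborel_n n) {v. length v = l n} (awgn_dens \<sigma>W2 n (e n))
                 (exp (- real n * \<delta>\<^sup>2 / 8))
              \<le> ereal (real n / 2 * log 2 (1 + \<delta> + P / \<sigma>W2)
                       + real n * \<delta> * log 2 (exp 1) / 2 + g n))"
proof -
  define s where "s = \<sigma>W2 * (1+\<delta>) + P"
  define \<theta> where "\<theta> = \<delta>/2"
  define D where "D = (1+\<theta>) * s - \<theta> * \<sigma>W2"
  define L where "L = ln (s/\<sigma>W2)/2 + \<delta>/2"
  define K where "K = \<theta> * (1+\<theta>)/(2 * D)"
  define A0 where "A0 = \<theta>/2 * ln (s/\<sigma>W2) + ln (s/D)/2"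
  have \<sigma>0: "\<sigma>W2 > 0" using assms by simp
  have ss: "s \<ge> \<sigma>W2" unfolding s_def using assms by (simp add: algebra_simps)
  have s0: "s > 0" using ss \<sigma>0 by linarith
  have th0: "\<theta> > 0" unfolding \<theta>_def using assms by simp
  have "\<theta> * (s - \<sigma>W2) \<ge> 0" using ss th0 by simp
  hence D0: "D > 0" unfolding D_def using s0 by (simp add: algebra_simps)
  have K0: "K \<ge> 0" unfolding K_def using th0 D0 by simp
  have sc: "ln (s/D)/2 + K * P \<le> \<delta>\<^sup>2/8"
    using scalar[OF \<sigma>0 assms(2) assms(4) assms(5) s_def \<theta>_def D_def] unfolding K_def by simp
  have key: "smooth_Imax (lborel_n n) {v. length v = l n} (awgn_dens \<sigma>W2 n (e n))
                 (exp (- real n * \<delta>\<^sup>2 / 8))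
              \<le> ereal (real n / 2 * log 2 (1 + \<delta> + P / \<sigma>W2)
                       + real n * \<delta> * log 2 (exp 1) / 2)" for n
  proof -
    define V where "V = {v::bool list. length v = l n}"
    define M where "M = lborel_n n"
    define \<omega> where "\<omega> = awgn_dens \<sigma>W2 n (e n)"
    define q where "q = (\<lambda>z::nat\<Rightarrow>real. \<Prod>i<n. normal_density 0 (sqrt s) (z i))"
    define c where "c = exp (real n * L)"
    define \<epsilon> where "\<epsilon> = exp (- real n * \<delta>\<^sup>2 / 8)"
    define T where "T = {p \<in> space (count_space V \<Otimes>\<^sub>M M). \<omega> (fst p) (snd p) \<le> c * q (snd p)}"
    have c0: "c > 0" unfolding c_def by simp
    have finV: "finite V" unfolding V_def using finite_lists_length_eq[of "UNIV::bool set" "l n"] by simp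
    have neV: "V \<noteq> {}" unfolding V_def by (metis (mono_tags) empty_iff length_replicate mem_Collect_eq)
    have q0: "q z > 0" for z unfolding q_def using s0 by (auto intro!: prod_pos normal_density_pos)
    have \<omega>0: "\<omega> v z > 0" for v z unfolding \<omega>_def awgn_dens_def using \<sigma>0 by (auto intro!: prod_pos normal_density_pos)
    have \<omega>m[measurable]: "\<omega> v \<in> borel_measurable M" for v
      unfolding \<omega>_def awgn_dens_def M_def lborel_n_def by measurable
    have qm[measurable]: "q \<in> borel_measurable M"
      unfolding q_def M_def lborel_n_def by measurable
    have \<omega>pm[measurable]: "(\<lambda>p. \<omega> (fst p) (snd p)) \<in> borel_measurable (count_space V \<Otimes>\<^sub>M M)"
      by (rule measurable_pair_measure_countable1) (use finV in \<open>auto simp: countable_finite\<close>)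
    have Tm: "T \<in> sets (count_space V \<Otimes>\<^sub>M M)"
      unfolding T_def by measurable
    have sec: "{z. (v,z) \<in> T} = {z \<in> space M. \<omega> v z \<le> c * q z}" if "v \<in> V" for v
      using that unfolding T_def by (auto simp: space_pair_measure)
    have xs: "(\<Sum>i<n. (e n v i)\<^sup>2) \<le> real n * P" if "v \<in> V" for v
    proof (cases "n = 0")
      case True thus ?thesis by simp
    next
      case False
      have "(1 / real n) * (\<Sum>i<n. (e n v i)\<^sup>2) \<le> P" using power that unfolding V_def by simp
      thus ?thesis using False by (simp add: field_simps)
    qed
    have mass: "ennreal (1 - \<epsilon>) \<le> (\<integral>\<^sup>+z. indicator {z. (v,z) \<in> T} z * ennreal (\<omega> v z) \<partial>M)" if vV: "v \<in> V" for v
    proof -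
      define x where "x = e n v"
      define g where "g = (\<lambda>i t. normal_density (x i) (sqrt \<sigma>W2) t * (normal_density (x i) (sqrt \<sigma>W2) t / normal_density 0 (sqrt s) t) powr \<theta>)"
      define h where "h = (\<lambda>z. \<omega> v z * (\<omega> v z / q z) powr \<theta>)"
      define aa where "aa = (\<lambda>i. \<theta>/2 * ln (s/\<sigma>W2) + ln (s/D)/2 + \<theta> * (1+\<theta>) * (x i)\<^sup>2/(2 * D))"
      have hg: "h z = (\<Prod>i<n. g i (z i))" for z
        unfolding h_def g_def \<omega>_def awgn_dens_def q_def x_def
        by (simp add: prod_dividef[symmetric] prod_powr_distrib prod.distrib)
      have gm[measurable]: "g i \<in> borel_measurable borel" for i unfolding g_def by measurable
      have g0: "g i t \<ge> 0" for i t unfolding g_def by simp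
      have h0: "h z \<ge> 0" for z unfolding h_def using \<omega>0[of v z] by simp
      have hm[measurable]: "h \<in> borel_measurable M" unfolding h_def by measurable
      have hint: "(\<integral>\<^sup>+z. ennreal (h z) \<partial>M) = ennreal (exp (\<Sum>i<n. aa i))"
      proof -
        have "(\<integral>\<^sup>+z. ennreal (h z) \<partial>M) = (\<Prod>i<n. \<integral>\<^sup>+t. ennreal (g i t) \<partial>lborel)"
          unfolding hg M_def by (rule prodint[OF gm g0])
        also have "\<dots> = (\<Prod>i<n. ennreal (exp (aa i)))"
          unfolding g_def aa_def by (intro prod.cong refl gauss_int[OF \<sigma>0 ss less_imp_le[OF th0] D_def])
        also have "\<dots> = ennreal (exp (\<Sum>i<n. aa i))" by (simp add: prod_ennreal exp_sum)
        finally show ?thesis .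
      qed
      have suma: "(\<Sum>i<n. aa i) = real n * A0 + K * (\<Sum>i<n. (x i)\<^sup>2)"
      proof -
        have "(\<Sum>i<n. aa i) = (\<Sum>i<n. A0 + K * (x i)\<^sup>2)"
          by (rule sum.cong) (simp_all add: aa_def A0_def K_def)
        thus ?thesis by (simp add: sum.distrib sum_distrib_left)
      qed
      have bnd: "- (\<theta> * (real n * L)) + (\<Sum>i<n. aa i) \<le> - real n * \<delta>\<^sup>2 / 8"
      proof -
        have "K * (\<Sum>i<n. (x i)\<^sup>2) \<le> K * (real n * P)"
          using xs[OF vV] K0 unfolding x_def by (intro mult_left_mono) auto
        hence "- (\<theta> * (real n * L)) + (\<Sum>i<n. aa i) \<le> - (\<theta> * (real n * L)) + (real n * A0 + K * (real n * P))"
          unfolding suma by simp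
        also have "\<dots> = real n * (- \<delta>\<^sup>2/4 + (ln (s/D)/2 + K * P))"
          unfolding L_def A0_def \<theta>_def by (simp add: algebra_simps power2_eq_square)
        also have "\<dots> \<le> real n * (- \<delta>\<^sup>2/4 + \<delta>\<^sup>2/8)"
          using sc by (intro mult_left_mono) auto
        also have "\<dots> = - real n * \<delta>\<^sup>2 / 8" by (simp add: algebra_simps)
        finally show ?thesis .
      qed
      have pt: "ennreal (\<omega> v z) \<le> indicator {z \<in> space M. \<omega> v z \<le> c * q z} z * ennreal (\<omega> v z) + ennreal (exp (-(\<theta> * (real n * L)))) * ennreal (h z)"
        if z: "z \<in> space M" for z
      proof (cases "\<omega> v z \<le> c * q z")
        case True
        thus ?thesis using z by simp
      next
        case False
        have r: "\<omega> v z / q z > c" using False q0[of z] by (simp add: field_simps)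
        have "c powr \<theta> \<le> (\<omega> v z / q z) powr \<theta>" using r c0 th0 by (intro powr_mono2) auto
        moreover have "c powr \<theta> = exp (\<theta> * (real n * L))" unfolding c_def by (simp add: exp_powr_real mult.commute)
        ultimately have "1 \<le> exp (-(\<theta> * (real n * L))) * (\<omega> v z / q z) powr \<theta>" by (simp add: exp_minus field_simps)
        hence "\<omega> v z * 1 \<le> \<omega> v z * (exp (-(\<theta> * (real n * L))) * (\<omega> v z / q z) powr \<theta>)"
          using \<omega>0[of v z] by (intro mult_left_mono) auto
        hence "\<omega> v z \<le> exp (-(\<theta> * (real n * L))) * h z" unfolding h_def by (simp add: algebra_simps)
        hence "ennreal (\<omega> v z) \<le> ennreal (exp (-(\<theta> * (real n * L))) * h z)" by (rule ennreal_leI)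
        thus ?thesis using False h0[of z] by (simp add: ennreal_mult)
      qed
      have "1 = (\<integral>\<^sup>+z. ennreal (\<omega> v z) \<partial>M)"
      proof -
        have "(\<integral>\<^sup>+z. ennreal (\<omega> v z) \<partial>M) = (\<Prod>i<n. \<integral>\<^sup>+t. ennreal (normal_density (x i) (sqrt \<sigma>W2) t) \<partial>lborel)"
          unfolding \<omega>_def awgn_dens_def M_def x_def by (rule prodint) auto
        also have "\<dots> = 1" using \<sigma>0 by (simp add: nd_int1)
        finally show ?thesis by simp
      qed
      also have "\<dots> \<le> (\<integral>\<^sup>+z. indicator {z \<in> space M. \<omega> v z \<le> c * q z} z * ennreal (\<omega> v z) + ennreal (exp (-(\<theta> * (real n * L)))) * ennreal (h z) \<partial>M)"
        by (rule nn_integral_mono) (rule pt)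
      also have "\<dots> = (\<integral>\<^sup>+z. indicator {z \<in> space M. \<omega> v z \<le> c * q z} z * ennreal (\<omega> v z) \<partial>M) + ennreal (exp (-(\<theta> * (real n * L)))) * (\<integral>\<^sup>+z. ennreal (h z) \<partial>M)"
        by (subst nn_integral_add) (auto simp: nn_integral_cmult)
      also have "ennreal (exp (-(\<theta> * (real n * L)))) * (\<integral>\<^sup>+z. ennreal (h z) \<partial>M) \<le> ennreal \<epsilon>"
      proof -
        have "ennreal (exp (-(\<theta> * (real n * L)))) * (\<integral>\<^sup>+z. ennreal (h z) \<partial>M) = ennreal (exp (- (\<theta> * (real n * L)) + (\<Sum>i<n. aa i)))"
          unfolding hint by (simp add: ennreal_mult[symmetric] mult_exp_exp)
        also have "\<dots> \<le> ennreal \<epsilon>" unfolding \<epsilon>_def using bnd by (intro ennreal_leI) simp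
        finally show ?thesis .
      qed
      finally have "1 \<le> (\<integral>\<^sup>+z. indicator {z \<in> space M. \<omega> v z \<le> c * q z} z * ennreal (\<omega> v z) \<partial>M) + ennreal \<epsilon>"
        by (simp add: add_left_mono)
      hence "ennreal (1 - \<epsilon>) \<le> (\<integral>\<^sup>+z. indicator {z \<in> space M. \<omega> v z \<le> c * q z} z * ennreal (\<omega> v z) \<partial>M)"
        by (rule ennreal_ge_sub) (simp add: \<epsilon>_def)
      thus ?thesis unfolding sec[OF vV] .
    qed
    have qint: "(\<integral>\<^sup>+z. ennreal (q z) \<partial>M) = 1"
    proof -
      have "(\<integral>\<^sup>+z. ennreal (q z) \<partial>M) = (\<Prod>i<n. \<integral>\<^sup>+t. ennreal (normal_density 0 (sqrt s) t) \<partial>lborel)"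
        unfolding q_def M_def by (rule prodint) auto
      also have "\<dots> = 1" using s0 by (simp add: nd_int1)
      finally show ?thesis .
    qed
    have im: "Imax M V (restr_dens T \<omega>) \<le> ereal (log 2 c)"
    proof -
      have "(\<integral>\<^sup>+z. ennreal (Max ((\<lambda>v. restr_dens T \<omega> v z) ` V)) \<partial>M) \<le> (\<integral>\<^sup>+z. ennreal c * ennreal (q z) \<partial>M)"
      proof (rule nn_integral_mono)
        fix z assume z: "z \<in> space M"
        have "Max ((\<lambda>v. restr_dens T \<omega> v z) ` V) \<le> c * q z"
        proof (subst Max_le_iff)
          show "finite ((\<lambda>v. restr_dens T \<omega> v z) ` V)" using finV by simp
          show "(\<lambda>v. restr_dens T \<omega> v z) ` V \<noteq> {}" using neV by simp
          show "\<forall>a\<in>(\<lambda>v. restr_dens T \<omega> v z) ` V. a \<le> c * q z"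
          proof safe
            fix v assume vV: "v \<in> V"
            have "(v,z) \<in> T \<longleftrightarrow> \<omega> v z \<le> c * q z" using sec[OF vV] z by blast
            thus "restr_dens T \<omega> v z \<le> c * q z" using q0[of z] c0 unfolding restr_dens_def by auto
          qed
        qed
        thus "ennreal (Max ((\<lambda>v. restr_dens T \<omega> v z) ` V)) \<le> ennreal c * ennreal (q z)"
          using c0 q0[of z] by (simp add: ennreal_mult[symmetric] ennreal_leI)
      qed
      also have "\<dots> = ennreal c" by (simp add: nn_integral_cmult qint)
      finally show ?thesis unfolding Imax_def by (rule log2_le[OF _ c0])
    qed
    have "smooth_Imax M V \<omega> \<epsilon> \<le> Imax M V (restr_dens T \<omega>)"
      unfolding smooth_Imax_def by (rule INF_lower) (use Tm mass in auto)
    also note im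
    also have "log 2 c = real n / 2 * log 2 (1 + \<delta> + P / \<sigma>W2) + real n * \<delta> * log 2 (exp 1) / 2"
    proof -
      have "s/\<sigma>W2 = 1 + \<delta> + P/\<sigma>W2" unfolding s_def using \<sigma>0 by (simp add: field_simps)
      thus ?thesis unfolding c_def L_def log_def by (simp add: field_simps)
    qed
    finally show ?thesis unfolding V_def M_def \<omega>_def \<epsilon>_def .
  qed
  show ?thesis
  proof (intro exI[of _ "\<lambda>_. 0"] conjI)
    show "(\<lambda>_. 0) \<in> o(\<lambda>n. real n)" by simp
    show "\<forall>\<^sub>F n in at_top. smooth_Imax (lborel_n n) {v. length v = l n} (awgn_dens \<sigma>W2 n (e n))
                 (exp (- real n * \<delta>\<^sup>2 / 8))
              \<le> ereal (real n / 2 * log 2 (1 + \<delta> + P / \<sigma>W2)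
                       + real n * \<delta> * log 2 (exp 1) / 2 + 0)"
      using key by (intro always_eventually allI) simp
  qed
qed

end
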